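(* Let $\Gamma=(G,\sigma)$, $G=(V,E)$, be a connected signed graph. Then there exists a real symmetric matrix $M$ compatible with $\Gamma$ such that the smallest eigenvalue $\lambda_1$ of $M$ is simple and a corresponding eigenfunction $f_1$ is nonzero at every vertex. In particular, $\mathfrak{S}(f_1)=1$ and the strong nodal domain of $f_1$ is the whole graph $G$.
   Context: A signed graph $\Gamma=(G,\sigma)$ is a finite simple undirected graph $G=(V,E)$ with $\sigma:E\to\{+1,-1\}$. The induced signed graph of a real symmetric $n\times n$ matrix $M$ has vertices $x_1,\dots,x_n$, edge $\{x_i,x_j\}$ iff $i\ne j$ and $M_{ij}\ne0$, sign $-M_{ij}/|M_{ij}|$; $M$ is compatible with $\Gamma$ if its induced signed graph is $\Gamma$. A walk is $y_1,\dots,y_m$ ($m\ge2$) with consecutive vertices adjacent; for $f:V\to\mathbb R$ an S-walk is a walk with $f(y_j)\sigma_{y_jy_{j+1}}f(y_{j+1})>0$ for all $j$. The strong nodal domains of $f$ are the induced subgraphs on the equivalence classes of the relation on $\{x:f(x)\ne0\}$ "$x=y$ or an S-walk connects $x$ and $y$"; $\mathfrak{S}(f)$ is their number. *)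

theory Defs
  imports "HOL-Analysis.Analysis" "HOL-Computational_Algebra.Polynomial"
begin

text \<open>Signed graphs on the finite vertex type 'n (vertices = UNIV).
  E is the (symmetric, irreflexive) adjacency relation, sg the sign function on edges.\<close>

definition signed_graph :: "('n::finite \<Rightarrow> 'n \<Rightarrow> bool) \<Rightarrow> ('n \<Rightarrow> 'n \<Rightarrow> real) \<Rightarrow> bool" where
  "signed_graph E sg \<longleftrightarrow> (\<forall>x y. E x y \<longrightarrow> E y x) \<and> (\<forall>x. \<not> E x x) \<and>
     (\<forall>x y. E x y \<longrightarrow> sg x y = sg y x \<and> (sg x y = 1 \<or> sg x y = -1))"

definition connected_graph :: "('n \<Rightarrow> 'n \<Rightarrow> bool) \<Rightarrow> bool" where
  "connected_graph E \<longleftrightarrow> (\<forall>x y. E\<^sup>*\<^sup>* x y)"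

definition symmetric_matrix :: "real^'n^'n \<Rightarrow> bool" where
  "symmetric_matrix M \<longleftrightarrow> transpose M = M"

definition compatible :: "real^'n^'n \<Rightarrow> ('n \<Rightarrow> 'n \<Rightarrow> bool) \<Rightarrow> ('n \<Rightarrow> 'n \<Rightarrow> real) \<Rightarrow> bool" where
  "compatible M E sg \<longleftrightarrow>
     (\<forall>i j. E i j \<longleftrightarrow> (i \<noteq> j \<and> M $ i $ j \<noteq> 0)) \<and>
     (\<forall>i j. E i j \<longrightarrow> sg i j = - (M $ i $ j / \<bar>M $ i $ j\<bar>))"

definition is_eigenvalue :: "real^'n^'n \<Rightarrow> real \<Rightarrow> bool" where
  "is_eigenvalue M l \<longleftrightarrow> (\<exists>v. v \<noteq> 0 \<and> M *v v = l *\<^sub>R v)"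

definition charpoly :: "real^'n^'n \<Rightarrow> real poly" where
  "charpoly M = det (\<chi> i j. (if i = j then [:0, 1:] else 0) - [: M $ i $ j :])"

definition simple_eigenvalue :: "real^'n^'n \<Rightarrow> real \<Rightarrow> bool" where
  "simple_eigenvalue M l \<longleftrightarrow> is_eigenvalue M l \<and> order l (charpoly M) = 1"

definition smallest_eigenvalue :: "real^'n^'n \<Rightarrow> real \<Rightarrow> bool" where
  "smallest_eigenvalue M l \<longleftrightarrow> is_eigenvalue M l \<and> (\<forall>m. is_eigenvalue M m \<longrightarrow> l \<le> m)"

definition walk :: "('n \<Rightarrow> 'n \<Rightarrow> bool) \<Rightarrow> 'n list \<Rightarrow> bool" where
  "walk E ys \<longleftrightarrow> length ys \<ge> 2 \<and> (\<forall>j. Suc j < length ys \<longrightarrow> E (ys ! j) (ys ! Suc j))"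

definition s_walk :: "('n \<Rightarrow> 'n \<Rightarrow> bool) \<Rightarrow> ('n \<Rightarrow> 'n \<Rightarrow> real) \<Rightarrow> ('n \<Rightarrow> real) \<Rightarrow> 'n list \<Rightarrow> bool" where
  "s_walk E sg f ys \<longleftrightarrow> walk E ys \<and>
     (\<forall>j. Suc j < length ys \<longrightarrow> f (ys ! j) * sg (ys ! j) (ys ! Suc j) * f (ys ! Suc j) > 0)"

definition strong_rel :: "('n \<Rightarrow> 'n \<Rightarrow> bool) \<Rightarrow> ('n \<Rightarrow> 'n \<Rightarrow> real) \<Rightarrow> ('n \<Rightarrow> real) \<Rightarrow> ('n \<times> 'n) set" where
  "strong_rel E sg f = {(x, y). f x \<noteq> 0 \<and> f y \<noteq> 0 \<and>
      (x = y \<or> (\<exists>ys. s_walk E sg f ys \<and> hd ys = x \<and> last ys = y))}"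

text \<open>Vertex sets of the strong nodal domains (each nodal domain is the induced subgraph on one of these).\<close>
definition strong_nodal_domains :: "('n \<Rightarrow> 'n \<Rightarrow> bool) \<Rightarrow> ('n \<Rightarrow> 'n \<Rightarrow> real) \<Rightarrow> ('n \<Rightarrow> real) \<Rightarrow> 'n set set" where
  "strong_nodal_domains E sg f = {x. f x \<noteq> 0} // strong_rel E sg f"

definition num_strong_nodal_domains :: "('n \<Rightarrow> 'n \<Rightarrow> bool) \<Rightarrow> ('n \<Rightarrow> 'n \<Rightarrow> real) \<Rightarrow> ('n \<Rightarrow> real) \<Rightarrow> nat" where
  "num_strong_nodal_domains E sg f = card (strong_nodal_domains E sg f)"

end

theory Submission
  imports Defs
begin

definition good :: "('n \<Rightarrow> 'n \<Rightarrow> bool) \<Rightarrow> ('n \<Rightarrow> 'n \<Rightarrow> real) \<Rightarrow> ('n \<Rightarrow> real) \<Rightarrow> 'n \<Rightarrow> 'n \<Rightarrow> bool" where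
  "good E sg s i j \<longleftrightarrow> E i j \<and> s i * sg i j * s j = 1"

lemma cross_edge:
  assumes "E\<^sup>*\<^sup>* a b" "a \<in> R" "b \<notin> R"
  shows "\<exists>u v. E u v \<and> u \<in> R \<and> v \<notin> R"
  using assms by (induction rule: rtranclp_induct) auto

definition inv_on where
  "inv_on E sg s r R \<longleftrightarrow> (\<forall>i. s i = 1 \<or> s i = -1) \<and>
     (\<forall>v\<in>R. (\<lambda>a b. good E sg s a b \<and> a \<in> R \<and> b \<in> R)\<^sup>*\<^sup>* r v)"

lemma rel_mono_rt:
  assumes "P\<^sup>*\<^sup>* a b" "\<And>x y. P x y \<Longrightarrow> Q x y"
  shows "Q\<^sup>*\<^sup>* a b"
  using assms(1) by (induction rule: rtranclp_induct) (auto intro: rtranclp.rtrancl_into_rtrancl assms(2))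

lemma grow:
  fixes E :: "'n::finite \<Rightarrow> 'n \<Rightarrow> bool"
  assumes sgr: "signed_graph E sg" and con: "connected_graph E"
  shows "r \<in> R \<Longrightarrow> inv_on E sg s r R \<Longrightarrow> \<exists>s'. inv_on E sg s' r UNIV"
proof (induction "card (- R)" arbitrary: R s rule: less_induct)
  case less
  show ?case
  proof (cases "R = UNIV")
    case True then show ?thesis using less by blast
  next
    case False
    then obtain b where b: "b \<notin> R" by blast
    have "E\<^sup>*\<^sup>* r b" using con unfolding connected_graph_def by blast
    then obtain u v where uv: "E u v" "u \<in> R" "v \<notin> R" using cross_edge[OF _ less(2) b] by blast
    define s' where "s' = s(v := s u * sg u v)"
    define R' where "R' = insert v R"
    have sgv: "sg u v = 1 \<or> sg u v = -1" using sgr uv(1) unfolding signed_graph_def by blast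
    have s1: "\<forall>i. s i = 1 \<or> s i = -1" using less(3) unfolding inv_on_def by blast
    have s'1: "\<forall>i. s' i = 1 \<or> s' i = -1" using s1 sgv unfolding s'_def by auto
    have gsame: "good E sg s' a b \<and> a \<in> R \<and> b \<in> R" if "good E sg s a b \<and> a \<in> R \<and> b \<in> R" for a b
      using that uv(3) unfolding good_def s'_def by auto
    have gmono: "good E sg s' a b \<and> a \<in> R' \<and> b \<in> R'" if "good E sg s' a b \<and> a \<in> R \<and> b \<in> R" for a b
      using that unfolding R'_def by auto
    have guv: "good E sg s' u v" using uv s1 sgv unfolding good_def s'_def
      by (cases "s u = 1"; cases "sg u v = 1") (auto simp: fun_upd_def)
    have "inv_on E sg s' r R'"
      unfolding inv_on_def
    proof (intro conjI ballI s'1)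
      fix w assume "w \<in> R'"
      have r1: "(\<lambda>a b. good E sg s' a b \<and> a \<in> R' \<and> b \<in> R')\<^sup>*\<^sup>* r x" if "x \<in> R" for x
      proof -
        have "(\<lambda>a b. good E sg s a b \<and> a \<in> R \<and> b \<in> R)\<^sup>*\<^sup>* r x" using less(3) that unfolding inv_on_def by blast
        then show ?thesis by (rule rel_mono_rt) (rule gmono, rule gsame)
      qed
      show "(\<lambda>a b. good E sg s' a b \<and> a \<in> R' \<and> b \<in> R')\<^sup>*\<^sup>* r w"
      proof (cases "w = v")
        case True
        have "(\<lambda>a b. good E sg s' a b \<and> a \<in> R' \<and> b \<in> R') u v" using guv uv unfolding R'_def by auto
        then show ?thesis using r1[OF uv(2)] True by (simp add: rtranclp.rtrancl_into_rtrancl)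
      next
        case False then show ?thesis using r1 \<open>w \<in> R'\<close> unfolding R'_def by auto
      qed
    qed
    moreover have "card (- R') < card (- R)"
      unfolding R'_def using uv(3) by (intro psubset_card_mono) auto
    moreover have "r \<in> R'" using less(2) R'_def by blast
    ultimately show ?thesis using less(1) by blast
  qed
qed

lemma signs_exist:
  fixes E :: "'n::finite \<Rightarrow> 'n \<Rightarrow> bool"
  assumes sgr: "signed_graph E sg" and con: "connected_graph E"
  shows "\<exists>s. (\<forall>i. s i = 1 \<or> s i = -1) \<and> (\<forall>i j. (good E sg s)\<^sup>*\<^sup>* i j)"
proof -
  fix r :: 'n
  have "inv_on E sg (\<lambda>_. 1) r {r}" unfolding inv_on_def by auto
  then obtain s where s: "inv_on E sg s r UNIV" using grow[OF sgr con] by blast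
  have s1: "\<forall>i. s i = 1 \<or> s i = -1" using s unfolding inv_on_def by blast
  have sym: "good E sg s b a" if "good E sg s a b" for a b
    using that sgr unfolding good_def signed_graph_def by (auto simp: mult_ac)
  have fr: "(good E sg s)\<^sup>*\<^sup>* r v" for v
  proof -
    have "(\<lambda>a b. good E sg s a b \<and> a \<in> UNIV \<and> b \<in> UNIV)\<^sup>*\<^sup>* r v" using s unfolding inv_on_def by blast
    then show ?thesis by (rule rel_mono_rt) simp
  qed
  have "(good E sg s)\<^sup>*\<^sup>* v r" for v
  proof -
    have "(good E sg s)\<^sup>*\<^sup>* r v" by (rule fr)
    then show ?thesis
      by (induction rule: rtranclp_induct) (auto intro: rtranclp.rtrancl_into_rtrancl converse_rtranclp_into_rtranclp sym)
  qed
  then have "\<forall>i j. (good E sg s)\<^sup>*\<^sup>* i j" using fr by (meson rtranclp_trans)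
  then show ?thesis using s1 by blast
qed

lemma walk_exists:
  assumes "P\<^sup>+\<^sup>+ x y"
  shows "\<exists>ys. length ys \<ge> 2 \<and> hd ys = x \<and> last ys = y \<and> (\<forall>j. Suc j < length ys \<longrightarrow> P (ys!j) (ys!Suc j))"
  using assms
proof (induction rule: tranclp_induct)
  case (base y)
  then show ?case by (intro exI[of _ "[x,y]"]) (auto simp: less_Suc_eq)
next
  case (step y z)
  then obtain ys where ys: "length ys \<ge> 2" "hd ys = x" "last ys = y" "\<forall>j. Suc j < length ys \<longrightarrow> P (ys!j) (ys!Suc j)" by blast
  show ?case
  proof (intro exI[of _ "ys @ [z]"] conjI allI impI)
    show "2 \<le> length (ys @ [z])" using ys by simp
    show "hd (ys @ [z]) = x" using ys by (cases ys) auto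
    show "last (ys @ [z]) = z" by simp
    fix j assume j: "Suc j < length (ys @ [z])"
    show "P ((ys @ [z]) ! j) ((ys @ [z]) ! Suc j)"
    proof (cases "Suc j < length ys")
      case True then show ?thesis using ys(4) by (simp add: nth_append)
    next
      case False
      then have "Suc j = length ys" using j by simp
      moreover have "ys ! j = y" using ys(1,3) \<open>Suc j = length ys\<close> by (metis diff_Suc_1 last_conv_nth list.size(3) nat.simps(3))
      ultimately show ?thesis using step(2) by (simp add: nth_append)
    qed
  qed
qed

definition Tsum :: "('n::finite \<Rightarrow> 'n \<Rightarrow> bool) \<Rightarrow> ('n \<Rightarrow> real) \<Rightarrow> real" where
  "Tsum G y = (\<Sum>a\<in>UNIV. \<Sum>b\<in>UNIV. if G a b then (y a - y b)^2 else 0)"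

lemma Tsum_nonneg: "Tsum G y \<ge> 0"
  unfolding Tsum_def by (intro sum_nonneg) auto

lemma Tsum_term: assumes "G a b" shows "(y a - y b)^2 \<le> Tsum G y"
proof -
  have "(y a - y b)^2 = (if G a b then (y a - y b)^2 else 0)" using assms by simp
  also have "\<dots> \<le> (\<Sum>b\<in>UNIV. if G a b then (y a - y b)^2 else 0)"
    by (rule member_le_sum[where f="\<lambda>b. if G a b then (y a - y b)^2 else 0"]) auto
  also have "\<dots> \<le> Tsum G y" unfolding Tsum_def
    by (rule member_le_sum[where f="\<lambda>a. \<Sum>b\<in>UNIV. if G a b then (y a - y b)^2 else 0"]) (auto intro: sum_nonneg)
  finally show ?thesis .
qed

lemma path_bound:
  assumes "G\<^sup>*\<^sup>* i j"
  shows "\<exists>L::nat. \<forall>y. \<bar>y i - y j\<bar> \<le> L * sqrt (Tsum G y)"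
  using assms
proof (induction rule: rtranclp_induct)
  case base then show ?case by (intro exI[of _ 0]) simp
next
  case (step j k)
  then obtain L::nat where L: "\<forall>y. \<bar>y i - y j\<bar> \<le> L * sqrt (Tsum G y)" by blast
  have "\<bar>y i - y k\<bar> \<le> (Suc L) * sqrt (Tsum G y)" for y
  proof -
    have "\<bar>y j - y k\<bar> = sqrt ((y j - y k)^2)" by simp
    also have "\<dots> \<le> sqrt (Tsum G y)" using Tsum_term[of G j k y, OF step(2)] real_sqrt_le_mono by blast
    finally have "\<bar>y j - y k\<bar> \<le> sqrt (Tsum G y)" .
    then show ?thesis using L[rule_format, of y] by (simp add: algebra_simps)
  qed
  then show ?case by blast
qed

lemma bound:
  fixes G :: "'n::finite \<Rightarrow> 'n \<Rightarrow> bool"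
  assumes "\<forall>i j. G\<^sup>*\<^sup>* i j"
  shows "\<exists>K\<ge>0. \<forall>i j y. (y i - y j)^2 \<le> K * Tsum G y"
proof -
  have "\<forall>i j. \<exists>L::nat. \<forall>y. \<bar>y i - y j\<bar> \<le> L * sqrt (Tsum G y)" using path_bound assms by blast
  define Lf where "Lf i j = (SOME L::nat. \<forall>y. \<bar>y i - y j\<bar> \<le> L * sqrt (Tsum G y))" for i j
  have Lf: "\<bar>y i - y j\<bar> \<le> Lf i j * sqrt (Tsum G y)" for i j y
  proof -
    have "\<exists>L::nat. \<forall>y. \<bar>y i - y j\<bar> \<le> L * sqrt (Tsum G y)" using path_bound assms by blast
    from someI_ex[OF this] show ?thesis unfolding Lf_def by blast
  qed
  define L where "L = (\<Sum>i\<in>UNIV. \<Sum>j\<in>UNIV. Lf i j)"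
  have LL: "Lf i j \<le> L" for i j
  proof -
    have "Lf i j \<le> (\<Sum>j\<in>UNIV. Lf i j)" by (rule member_le_sum) auto
    also have "\<dots> \<le> L" unfolding L_def by (rule member_le_sum[where f="\<lambda>i. \<Sum>j\<in>UNIV. Lf i j"]) auto
    finally show ?thesis .
  qed
  have "(y i - y j)^2 \<le> (real L)^2 * Tsum G y" for i j y
  proof -
    have "\<bar>y i - y j\<bar> \<le> L * sqrt (Tsum G y)"
      using Lf[of y i j] LL[of i j] by (meson mult_right_mono of_nat_le_iff order_trans real_sqrt_ge_zero Tsum_nonneg)
    then have "\<bar>y i - y j\<bar>^2 \<le> (L * sqrt (Tsum G y))^2" by (intro power_mono) auto
    then show ?thesis using Tsum_nonneg[of G y] by (simp add: power_mult_distrib)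
  qed
  then show ?thesis by (intro exI[of _ "(real L)^2"]) auto
qed

definition wt :: "('n \<Rightarrow> 'n \<Rightarrow> bool) \<Rightarrow> ('n \<Rightarrow> 'n \<Rightarrow> real) \<Rightarrow> ('n \<Rightarrow> real) \<Rightarrow> real \<Rightarrow> 'n \<Rightarrow> 'n \<Rightarrow> real" where
  "wt E sg s W i j = (if E i j then sg i j * (if s i * sg i j * s j = 1 then W else 1) else 0)"

definition Mx :: "('n::finite \<Rightarrow> 'n \<Rightarrow> bool) \<Rightarrow> ('n \<Rightarrow> 'n \<Rightarrow> real) \<Rightarrow> ('n \<Rightarrow> real) \<Rightarrow> real \<Rightarrow> real^'n^'n" where
  "Mx E sg s W = (\<chi> i j. (if i = j then (\<Sum>k\<in>UNIV. s i * s k * wt E sg s W i k) else 0) - wt E sg s W i j)"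

lemma wt_sym: assumes "signed_graph E sg" shows "wt E sg s W i j = wt E sg s W j i"
  using assms unfolding wt_def signed_graph_def by (auto simp: mult_ac)

lemma Mx_sym: assumes "signed_graph E sg" shows "symmetric_matrix (Mx E sg s W)"
  unfolding symmetric_matrix_def Mx_def transpose_def
  by (rule vec_eq_iff[THEN iffD2], auto simp: vec_eq_iff wt_sym[OF assms])

lemma Mx_compat: assumes sgr: "signed_graph E sg" and W: "W > 0"
  shows "compatible (Mx E sg s W) E sg"
proof -
  have irr: "\<not> E i i" for i using sgr unfolding signed_graph_def by blast
  have pm: "E i j \<Longrightarrow> sg i j = 1 \<or> sg i j = -1" for i j using sgr unfolding signed_graph_def by blast
  have off: "i \<noteq> j \<Longrightarrow> Mx E sg s W $ i $ j = - wt E sg s W i j" for i j unfolding Mx_def by simp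
  show ?thesis unfolding compatible_def
  proof (intro conjI allI impI)
    fix i j
    show "E i j = (i \<noteq> j \<and> Mx E sg s W $ i $ j \<noteq> 0)"
    proof (cases "E i j")
      case True then have "i \<noteq> j" using irr by blast
      then show ?thesis using True off pm[OF True] W unfolding wt_def by auto
    next
      case False then show ?thesis using off[of i j] unfolding wt_def by (cases "i = j") auto
    qed
  next
    fix i j assume e: "E i j"
    then have "i \<noteq> j" using irr by blast
    then show "sg i j = - (Mx E sg s W $ i $ j / \<bar>Mx E sg s W $ i $ j\<bar>)"
      using e off pm[OF e] W unfolding wt_def by (auto simp: abs_mult)
  qed
qed

lemma Mx_f: assumes "\<forall>i. s i = 1 \<or> s i = -1"
  shows "Mx E sg s W *v (\<chi> i. s i) = 0"
proof -
  have ss: "s i * s i = 1" for i using assms by (metis mult_1 mult_minus1 minus_minus)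
  have "(\<Sum>j\<in>UNIV. Mx E sg s W $ i $ j * s j) = 0" for i
  proof -
    have "(\<Sum>j\<in>UNIV. Mx E sg s W $ i $ j * s j) =
       (\<Sum>j\<in>UNIV. (if i = j then (\<Sum>k\<in>UNIV. s i * s k * wt E sg s W i k) * s j else 0)) - (\<Sum>j\<in>UNIV. wt E sg s W i j * s j)"
      unfolding sum_subtractf[symmetric] by (rule sum.cong) (auto simp: Mx_def left_diff_distrib)
    also have "\<dots> = (\<Sum>k\<in>UNIV. s i * s k * wt E sg s W i k) * s i - (\<Sum>j\<in>UNIV. wt E sg s W i j * s j)"
      by (simp add: if_distrib cong: if_cong)
    also have "\<dots> = 0"
    proof -
      have "(\<Sum>k\<in>UNIV. s i * s k * wt E sg s W i k) * s i = (\<Sum>k\<in>UNIV. (s i * s i) * (wt E sg s W i k * s k))"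
        by (simp add: sum_distrib_right sum_distrib_left mult_ac)
      then show ?thesis by (simp add: ss)
    qed
    finally show ?thesis .
  qed
  then show ?thesis by (simp add: vec_eq_iff matrix_vector_mult_def)
qed

lemma Mx_apply: "(Mx E sg s W *v x) $ i = (\<Sum>k\<in>UNIV. s i * s k * wt E sg s W i k) * x $ i - (\<Sum>j\<in>UNIV. wt E sg s W i j * x $ j)"
proof -
  have "(Mx E sg s W *v x) $ i =
       (\<Sum>j\<in>UNIV. (if i = j then (\<Sum>k\<in>UNIV. s i * s k * wt E sg s W i k) * x $ j else 0)) - (\<Sum>j\<in>UNIV. wt E sg s W i j * x $ j)"
    unfolding matrix_vector_mult_def vec_lambda_beta sum_subtractf[symmetric]
    by (rule sum.cong) (auto simp: Mx_def left_diff_distrib)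
  also have "\<dots> = (\<Sum>k\<in>UNIV. s i * s k * wt E sg s W i k) * x $ i - (\<Sum>j\<in>UNIV. wt E sg s W i j * x $ j)"
    by (simp add: if_distrib cong: if_cong)
  finally show ?thesis .
qed

lemma qf_eq:
  assumes sgr: "signed_graph E sg" and s1: "\<forall>i. s i = 1 \<or> s i = -1"
  shows "2 * (\<Sum>i\<in>UNIV. x $ i * (Mx E sg s W *v x) $ i) =
     (\<Sum>i\<in>UNIV. \<Sum>j\<in>UNIV. s i * s j * wt E sg s W i j * (s i * x $ i - s j * x $ j)^2)"
proof -
  have ss: "s i * s i = 1" for i using s1 by (metis mult_1 mult_minus1 minus_minus)
  define a where "a i j = s i * s j * wt E sg s W i j * (x $ i)^2" for i j
  define b where "b i j = wt E sg s W i j * x $ i * x $ j" for i j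
  have trm: "s i * s j * wt E sg s W i j * (s i * x $ i - s j * x $ j)^2 = a i j + a j i - 2 * b i j" for i j
  proof -
    have "s i * s j * wt E sg s W i j * (s i * x $ i - s j * x $ j)^2 =
       s i * s j * wt E sg s W i j * ((s i * s i) * (x $ i)^2 + (s j * s j) * (x $ j)^2 - 2 * (s i * s j) * x $ i * x $ j)"
      by (simp add: power2_eq_square algebra_simps)
    also have "\<dots> = s i * s j * wt E sg s W i j * (x $ i)^2 + s i * s j * wt E sg s W i j * (x $ j)^2 - 2 * ((s i * s i) * (s j * s j)) * wt E sg s W i j * x $ i * x $ j"
      by (simp add: ss algebra_simps)
    also have "\<dots> = a i j + a j i - 2 * b i j"
      unfolding a_def b_def using wt_sym[OF sgr, of s W i j] by (simp add: ss mult_ac)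
    finally show ?thesis .
  qed
  have "(\<Sum>i\<in>UNIV. \<Sum>j\<in>UNIV. s i * s j * wt E sg s W i j * (s i * x $ i - s j * x $ j)^2) =
      (\<Sum>i\<in>UNIV. \<Sum>j\<in>UNIV. a i j) + (\<Sum>i\<in>UNIV. \<Sum>j\<in>UNIV. a j i) - 2 * (\<Sum>i\<in>UNIV. \<Sum>j\<in>UNIV. b i j)"
    unfolding trm by (simp add: sum.distrib sum_subtractf sum_distrib_left)
  also have "(\<Sum>i\<in>UNIV. \<Sum>j\<in>UNIV. a j i) = (\<Sum>i\<in>UNIV. \<Sum>j\<in>UNIV. a i j)" by (rule sum.swap)
  finally have R: "(\<Sum>i\<in>UNIV. \<Sum>j\<in>UNIV. s i * s j * wt E sg s W i j * (s i * x $ i - s j * x $ j)^2) =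
      2 * (\<Sum>i\<in>UNIV. \<Sum>j\<in>UNIV. a i j) - 2 * (\<Sum>i\<in>UNIV. \<Sum>j\<in>UNIV. b i j)" by simp
  have "x $ i * (Mx E sg s W *v x) $ i = (\<Sum>j\<in>UNIV. a i j) - (\<Sum>j\<in>UNIV. b i j)" for i
    unfolding Mx_apply a_def b_def by (simp add: right_diff_distrib sum_distrib_left sum_distrib_right power2_eq_square mult_ac)
  then have "(\<Sum>i\<in>UNIV. x $ i * (Mx E sg s W *v x) $ i) = (\<Sum>i\<in>UNIV. \<Sum>j\<in>UNIV. a i j) - (\<Sum>i\<in>UNIV. \<Sum>j\<in>UNIV. b i j)"
    by (simp add: sum_subtractf)
  then show ?thesis using R by simp
qed

lemma c_val:
  assumes sgr: "signed_graph E sg" and s1: "\<forall>i. s i = 1 \<or> s i = -1"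
  shows "s i * s j * wt E sg s W i j = (if good E sg s i j then W else if E i j then -1 else 0)"
proof -
  have pm: "E i j \<Longrightarrow> sg i j = 1 \<or> sg i j = -1" using sgr unfolding signed_graph_def by blast
  show ?thesis using pm s1[rule_format, of i] s1[rule_format, of j] unfolding wt_def good_def
    by (auto simp: mult_ac)
qed

lemma qf_props:
  fixes E :: "'n::finite \<Rightarrow> 'n \<Rightarrow> bool"
  assumes sgr: "signed_graph E sg" and s1: "\<forall>i. s i = 1 \<or> s i = -1"
    and K: "K \<ge> 0" "\<forall>i j (y::'n \<Rightarrow> real). (y i - y j)^2 \<le> K * Tsum (good E sg s) y"
    and Wdef: "W = real (CARD('n)) * real (CARD('n)) * K + 1"
  shows "2 * (\<Sum>i\<in>UNIV. x $ i * (Mx E sg s W *v x) $ i) \<ge> Tsum (good E sg s) (\<lambda>i. s i * x $ i)"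
proof -
  define y where "y i = s i * x $ i" for i
  define G where "G = good E sg s"
  define d where "d i j = (y i - y j)^2" for i j
  have d0: "d i j \<ge> 0" for i j unfolding d_def by simp
  have "2 * (\<Sum>i\<in>UNIV. x $ i * (Mx E sg s W *v x) $ i) = (\<Sum>i\<in>UNIV. \<Sum>j\<in>UNIV. (if G i j then W else if E i j then -1 else 0) * d i j)"
    unfolding qf_eq[OF sgr s1] c_val[OF sgr s1] G_def d_def y_def ..
  also have "\<dots> \<ge> (\<Sum>i\<in>UNIV. \<Sum>j\<in>UNIV. (if G i j then W * d i j else 0) - d i j)"
    by (intro sum_mono) (use d0 in auto)
  also have "(\<Sum>i\<in>UNIV. \<Sum>j\<in>UNIV. (if G i j then W * d i j else 0) - d i j) =
     (\<Sum>i\<in>UNIV. \<Sum>j\<in>UNIV. (if G i j then W * d i j else 0)) - (\<Sum>i\<in>UNIV. \<Sum>j\<in>UNIV. d i j)"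
    by (simp only: sum_subtractf)
  also have "(\<Sum>i\<in>UNIV. \<Sum>j\<in>UNIV. (if G i j then W * d i j else 0)) = W * Tsum G y"
    unfolding Tsum_def sum_distrib_left d_def by (intro sum.cong refl) simp
  finally have 1: "2 * (\<Sum>i\<in>UNIV. x $ i * (Mx E sg s W *v x) $ i) \<ge> W * Tsum G y - (\<Sum>i\<in>UNIV. \<Sum>j\<in>UNIV. d i j)" .
  have "(\<Sum>i\<in>UNIV. \<Sum>j\<in>UNIV. d i j) \<le> (\<Sum>i\<in>(UNIV::'n set). \<Sum>j\<in>(UNIV::'n set). K * Tsum G y)"
    by (intro sum_mono) (use K(2) in \<open>auto simp: d_def G_def\<close>)
  also have "\<dots> = real (CARD('n)) * real (CARD('n)) * K * Tsum G y" by simp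
  finally have "2 * (\<Sum>i\<in>UNIV. x $ i * (Mx E sg s W *v x) $ i) \<ge> W * Tsum G y - real (CARD('n)) * real (CARD('n)) * K * Tsum G y"
    using 1 by linarith
  then show ?thesis unfolding Wdef G_def y_def by (simp add: algebra_simps)
qed

lemma qf_zero:
  fixes E :: "'n::finite \<Rightarrow> 'n \<Rightarrow> bool"
  assumes s1: "\<forall>i. s i = 1 \<or> s i = -1"
    and K: "\<forall>i j (y::'n \<Rightarrow> real). (y i - y j)^2 \<le> K * Tsum (good E sg s) y"
    and T: "Tsum (good E sg s) (\<lambda>i. s i * x $ i) \<le> 0"
  shows "x = (s r * x $ r) *\<^sub>R (\<chi> i. s i)"
proof -
  have ss: "s i * s i = 1" for i using s1 by (metis mult_1 mult_minus1 minus_minus)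
  have T0: "Tsum (good E sg s) (\<lambda>i. s i * x $ i) = 0" using T Tsum_nonneg[of "good E sg s" "\<lambda>i. s i * x $ i"] by linarith
  have eq: "s i * x $ i = s r * x $ r" for i
  proof -
    have "(s i * x $ i - s r * x $ r)^2 \<le> K * Tsum (good E sg s) (\<lambda>i. s i * x $ i)"
      using K[rule_format, of "\<lambda>i. s i * x $ i" i r] by simp
    then have "(s i * x $ i - s r * x $ r)^2 \<le> 0" unfolding T0 by simp
    then have "s i * x $ i - s r * x $ r = 0" by (simp only: power2_less_eq_zero_iff)
    then show ?thesis by simp
  qed
  have xi: "x $ i = (s r * x $ r) * s i" for i
  proof -
    have "(s r * x $ r) * s i = (s i * x $ i) * s i" by (simp only: eq[of i])
    also have "\<dots> = (s i * s i) * x $ i" by (simp only: mult_ac)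
    also have "\<dots> = x $ i" by (simp only: ss mult_1)
    finally show ?thesis by simp
  qed
  show ?thesis
  proof (rule vec_eq_iff[THEN iffD2], rule allI)
    fix i
    show "x $ i = ((s r * x $ r) *\<^sub>R (\<chi> i. s i)) $ i"
      using xi[of i] by simp
  qed
qed

lemma poly_det: "poly (det (X :: real poly^'n^'n)) t = det (\<chi> i j. poly (X$i$j) t)"
  unfolding det_def by (simp add: poly_sum poly_prod)

lemma charpoly_eval: "poly (charpoly M) t = det (\<chi> i j. (if i = j then t else 0) - M$i$j)"
  unfolding charpoly_def poly_det by (rule arg_cong[where f=det]) (simp add: vec_eq_iff)

lemma det_identity:
  fixes M :: "real^'n^'n"
  assumes Mf: "M *v f = 0"
  shows "f$r * det (\<chi> i j. (if i = j then t else 0) - M$i$j) =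
         t * det (\<chi> i j. if j = r then f$i else (if i = j then t else 0) - M$i$j)"
proof -
  define N where "N = (\<chi> i j. (if i = j then t else 0) - M$i$j)"
  define R where "R = transpose N"
  have Nf: "N *v f = t *s f"
  proof -
    have "(N *v f) $ i = t * f $ i" for i
    proof -
      have "(N *v f) $ i = (\<Sum>j\<in>UNIV. (if i = j then t * f $ j else 0)) - (\<Sum>j\<in>UNIV. M$i$j * f$j)"
        unfolding matrix_vector_mult_def N_def sum_subtractf[symmetric] vec_lambda_beta
        by (rule sum.cong) (auto simp: left_diff_distrib)
      also have "(\<Sum>j\<in>UNIV. M$i$j * f$j) = 0" 
      proof -
        have "(M *v f) $ i = 0" using Mf by simp
        then show ?thesis by (simp add: matrix_vector_mult_def)
      qed
      finally show ?thesis by simp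
    qed
    then show ?thesis by (simp add: vec_eq_iff)
  qed
  have RR: "(\<chi> k. if k = r then row r R else row k R) = R" by (simp add: vec_eq_iff row_def)
  define R1 where "R1 = (\<chi> k. if k = r then f$r *s row r R else row k R)"
  have d1: "det R1 = f$r * det R"
    unfolding R1_def using det_row_mul[of r "f$r" "\<lambda>_. row r R" "\<lambda>k. row k R"] RR by simp
  define x where "x = (\<Sum>j\<in>UNIV-{r}. f$j *s row j R1)"
  have xspan: "x \<in> vec.span {row j R1 |j. j \<noteq> r}"
    unfolding x_def by (intro vec.span_sum vec.span_scale vec.span_base) auto
  have rowR1: "row r R1 = f$r *s row r R" "\<And>k. k \<noteq> r \<Longrightarrow> row k R1 = row k R"
    unfolding R1_def by (auto simp: row_def vec_eq_iff)
  have d2: "det (\<chi> k. if k = r then row r R1 + x else row k R1) = det R1"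
    by (rule det_row_span[OF xspan])
  have rowsum: "row r R1 + x = t *s f"
  proof -
    have "row r R1 + x = (\<Sum>j\<in>UNIV. f$j *s row j R)"
    proof -
      have "(\<Sum>j\<in>UNIV. f$j *s row j R) = f$r *s row r R + (\<Sum>j\<in>UNIV-{r}. f$j *s row j R)"
        by (simp add: sum.remove)
      also have "(\<Sum>j\<in>UNIV-{r}. f$j *s row j R) = x"
        unfolding x_def by (rule sum.cong) (auto simp: rowR1)
      finally show ?thesis using rowR1(1) by simp
    qed
    also have "\<dots> = N *v f"
      by (simp add: vec_eq_iff sum_component matrix_vector_mult_def R_def row_def transpose_def mult.commute)
    finally show ?thesis using Nf by simp
  qed
  have R2: "(\<chi> k. if k = r then row r R1 + x else row k R1) = (\<chi> k. if k = r then t *s f else row k R)"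
    using rowsum rowR1(2) by (simp add: vec_eq_iff)
  have d3: "det (\<chi> k. if k = r then t *s f else row k R) = t * det (\<chi> k. if k = r then f else row k R)"
    by (rule det_row_mul)
  have tr: "(\<chi> k. if k = r then f else row k R) = transpose (\<chi> i j. if j = r then f$i else (if i = j then t else 0) - M$i$j)"
    by (simp add: vec_eq_iff R_def N_def row_def transpose_def)
  have dN: "det N = det R" unfolding R_def by simp
  have dY: "det (\<chi> k. if k = r then f else row k R) = det (\<chi> i j. if j = r then f$i else (if i = j then t else 0) - M$i$j)"
    unfolding tr by (rule det_transpose)
  have "f$r * det N = t * det (\<chi> k. if k = r then f else row k R)"
    using dN d1 d2 d3 R2 by simp
  then show ?thesis using dY unfolding N_def by simp
qed

lemma sumsq_pos: "(v::real^'n) \<noteq> 0 \<Longrightarrow> (\<Sum>i\<in>UNIV. v$i * v$i) > 0"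
proof -
  assume "v \<noteq> 0"
  then obtain k where "v$k \<noteq> 0" by (auto simp: vec_eq_iff)
  then have "0 < v$k * v$k" by (metis not_real_square_gt_zero)
  then show ?thesis using sum_pos2[of UNIV k "\<lambda>i. v $ i * v $ i"] by auto
qed

lemma eig_lemma:
  fixes M :: "real^'n^'n" and f :: "real^'n"
  assumes sym: "transpose M = M" and Mf: "M *v f = 0" and fnz: "\<forall>i. f$i \<noteq> 0"
    and psd: "\<forall>x. 0 \<le> (\<Sum>i\<in>UNIV. x$i * (M *v x)$i)"
    and ker: "\<forall>x. (\<Sum>i\<in>UNIV. x$i * (M *v x)$i) = 0 \<longrightarrow> (\<exists>c. x = c *\<^sub>R f)"
  shows "smallest_eigenvalue M 0 \<and> simple_eigenvalue M 0"
proof -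
  have f0: "f \<noteq> 0" using fnz by (auto simp: vec_eq_iff)
  have ev0: "is_eigenvalue M 0" unfolding is_eigenvalue_def using f0 Mf by auto
  have small: "smallest_eigenvalue M 0"
    unfolding smallest_eigenvalue_def
  proof (intro conjI ev0 allI impI)
    fix m assume "is_eigenvalue M m"
    then obtain v where v: "v \<noteq> 0" "M *v v = m *\<^sub>R v" unfolding is_eigenvalue_def by blast
    have "(\<Sum>i\<in>UNIV. v$i * (M *v v)$i) = m * (\<Sum>i\<in>UNIV. v$i * v$i)"
      unfolding v(2) by (simp add: sum_distrib_left mult_ac)
    then have "0 \<le> m * (\<Sum>i\<in>UNIV. v$i * v$i)" using psd by metis
    then show "0 \<le> m" using sumsq_pos[OF v(1)] by (simp add: zero_le_mult_iff)
  qed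
  have Msym: "M$i$j = M$j$i" for i j
    using sym by (metis transpose_def vec_lambda_beta)
  fix r :: 'n
  define D0 where "D0 = (\<chi> i j. if j = r then f$i else (if i = j then 0 else 0) - M$i$j)"
  have ker0: "x = 0" if Dx: "D0 *v x = 0" for x
  proof -
    define x' where "x' = (\<chi> j. if j = r then 0 else x$j)"
    have comp: "(D0 *v x)$i = x$r * f$i - (M *v x')$i" for i
    proof -
      have "(D0 *v x)$i = (\<Sum>j\<in>UNIV. (if j = r then x$r * f$i else 0)) - (\<Sum>j\<in>UNIV. M$i$j * x'$j)"
        unfolding matrix_vector_mult_def D0_def x'_def vec_lambda_beta sum_subtractf[symmetric]
        by (rule sum.cong) auto
      then show ?thesis by (simp add: matrix_vector_mult_def)
    qed
    have Mx': "(M *v x')$i = x$r * f$i" for i using comp[of i] Dx by simp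
    have "(\<Sum>i\<in>UNIV. f$i * (M *v x')$i) = (\<Sum>j\<in>UNIV. x'$j * (M *v f)$j)"
    proof -
      have "(\<Sum>i\<in>UNIV. f$i * (M *v x')$i) = (\<Sum>i\<in>UNIV. \<Sum>j\<in>UNIV. f$i * M$i$j * x'$j)"
        by (simp add: matrix_vector_mult_def sum_distrib_left mult_ac)
      also have "\<dots> = (\<Sum>j\<in>UNIV. \<Sum>i\<in>UNIV. f$i * M$i$j * x'$j)" by (rule sum.swap)
      also have "\<dots> = (\<Sum>j\<in>UNIV. x'$j * (M *v f)$j)"
        by (simp add: matrix_vector_mult_def sum_distrib_left mult_ac Msym[of _ j for j])
      finally show ?thesis .
    qed
    also have "\<dots> = 0" using Mf by simp
    finally have "x$r * (\<Sum>i\<in>UNIV. f$i * f$i) = 0"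
      unfolding Mx' by (simp add: sum_distrib_left mult_ac)
    then have xr: "x$r = 0" using sumsq_pos[OF f0] by simp
    then have "M *v x' = 0" using Mx' by (simp add: vec_eq_iff)
    then have "(\<Sum>i\<in>UNIV. x'$i * (M *v x')$i) = 0" by simp
    then obtain c where c: "x' = c *\<^sub>R f" using ker by blast
    have "x'$r = 0" unfolding x'_def by simp
    then have "c = 0" using c fnz by simp
    then have "x' = 0" using c by simp
    then show "x = 0" using xr unfolding x'_def by (auto simp: vec_eq_iff split: if_splits)
  qed
  have "inj ((*v) D0)"
  proof (rule injI)
    fix a b assume "D0 *v a = D0 *v b"
    then have "D0 *v (a - b) = 0" by (simp add: matrix_vector_mult_diff_distrib)
    then have "a - b = 0" by (rule ker0)
    then show "a = b" by simp
  qed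
  then have detD0: "det D0 \<noteq> 0"
    using det_nz_iff_inj[OF matrix_vector_mul_linear[of D0]] by simp
  define Dp where "Dp = (\<chi> i j. if j = r then [:f$i:] else (if i = j then [:0,1:] else 0) - [:M$i$j:])"
  have polyeq: "charpoly M * [:f$r:] = [:0,1:] * det Dp"
  proof (rule poly_eq_poly_eq_iff[THEN iffD1], rule ext)
    fix t
    have "poly (det Dp) t = det (\<chi> i j. if j = r then f$i else (if i = j then t else 0) - M$i$j)"
      unfolding poly_det Dp_def by (rule arg_cong[where f=det]) (simp add: vec_eq_iff)
    then show "poly (charpoly M * [:f$r:]) t = poly ([:0,1:] * det Dp) t"
      using det_identity[OF Mf, of r t] by (simp add: charpoly_eval mult.commute)
  qed
  have q0: "poly (det Dp) 0 \<noteq> 0"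
  proof -
    have "poly (det Dp) 0 = det D0"
      unfolding poly_det Dp_def D0_def by (rule arg_cong[where f=det]) (simp add: vec_eq_iff)
    then show ?thesis using detD0 by simp
  qed
  then have Dp0: "det Dp \<noteq> 0" by auto
  have rhs0: "[:0,1:] * det Dp \<noteq> 0" using Dp0 by simp
  then have cp0: "charpoly M * [:f$r:] \<noteq> 0" using polyeq by simp
  have "order 0 (charpoly M * [:f$r:]) = order 0 (charpoly M) + order 0 [:f$r:]"
    by (rule order_mult[OF cp0])
  also have "order 0 [:f$r:] = 0" using fnz by (intro order_0I) simp
  finally have o1: "order 0 (charpoly M * [:f$r:]) = order 0 (charpoly M)" by simp
  have "order 0 ([:0,1:] * det Dp) = order 0 [:0,1::real:] + order 0 (det Dp)"
    by (rule order_mult[OF rhs0])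
  also have "order 0 (det Dp) = 0" using q0 by (rule order_0I)
  also have "order 0 [:0,1::real:] = (1::nat)" using order_power_n_n[of 0 1] by simp
  finally have "order 0 (charpoly M) = 1" using o1 polyeq by simp
  then show ?thesis using small ev0 unfolding simple_eigenvalue_def by simp
qed

theorem theorem3p10:
  fixes E :: "'n::finite \<Rightarrow> 'n \<Rightarrow> bool" and sg :: "'n \<Rightarrow> 'n \<Rightarrow> real"
  assumes "signed_graph E sg" and "connected_graph E"
  shows "\<exists>(M :: real^'n^'n) l1 f1.
           symmetric_matrix M \<and> compatible M E sg \<and>
           smallest_eigenvalue M l1 \<and> simple_eigenvalue M l1 \<and>
           f1 \<noteq> 0 \<and> M *v f1 = l1 *\<^sub>R f1 \<and> (\<forall>x. f1 $ x \<noteq> 0) \<and>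
           num_strong_nodal_domains E sg (\<lambda>x. f1 $ x) = 1 \<and>
           strong_nodal_domains E sg (\<lambda>x. f1 $ x) = {UNIV}"
proof -
  note sgr = assms(1)
  obtain s where s1: "\<forall>i. s i = 1 \<or> s i = -1" and conn: "\<forall>i j. (good E sg s)\<^sup>*\<^sup>* i j"
    using signs_exist[OF assms] by blast
  obtain K where K0: "K \<ge> 0" and Kb: "\<forall>i j (y::'n \<Rightarrow> real). (y i - y j)^2 \<le> K * Tsum (good E sg s) y"
    using bound[OF conn] by blast
  define W where "W = real (CARD('n)) * real (CARD('n)) * K + 1"
  have "0 \<le> real (CARD('n)) * real (CARD('n)) * K" using K0 by simp
  then have W0: "W > 0" unfolding W_def by linarith
  define M where "M = Mx E sg s W"
  define f :: "real^'n" where "f = (\<chi> i. s i)"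
  have fnz: "\<forall>i. f$i \<noteq> 0" 
  proof
    fix i show "f$i \<noteq> 0" unfolding f_def using s1[rule_format, of i] by auto
  qed
  have f0: "f \<noteq> 0" using fnz by (auto simp: vec_eq_iff)
  have sym: "symmetric_matrix M" unfolding M_def by (rule Mx_sym[OF sgr])
  have comp: "compatible M E sg" unfolding M_def by (rule Mx_compat[OF sgr W0])
  have Mf: "M *v f = 0" unfolding M_def f_def by (rule Mx_f[OF s1])
  have qge: "2 * (\<Sum>i\<in>UNIV. x $ i * (M *v x) $ i) \<ge> Tsum (good E sg s) (\<lambda>i. s i * x $ i)" for x
    unfolding M_def by (rule qf_props[OF sgr s1 K0 Kb W_def])
  have psd: "\<forall>x. 0 \<le> (\<Sum>i\<in>UNIV. x$i * (M *v x)$i)"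
  proof
    fix x show "0 \<le> (\<Sum>i\<in>UNIV. x$i * (M *v x)$i)"
      using qge[of x] Tsum_nonneg[of "good E sg s" "\<lambda>i. s i * x $ i"] by linarith
  qed
  have ker: "\<forall>x. (\<Sum>i\<in>UNIV. x$i * (M *v x)$i) = 0 \<longrightarrow> (\<exists>c. x = c *\<^sub>R f)"
  proof (intro allI impI)
    fix x :: "real^'n" assume "(\<Sum>i\<in>UNIV. x$i * (M *v x)$i) = 0"
    then have "Tsum (good E sg s) (\<lambda>i. s i * x $ i) \<le> 0" using qge[of x] by simp
    then have "x = (s r * x $ r) *\<^sub>R (\<chi> i. s i)" for r by (rule qf_zero[OF s1 Kb])
    then show "\<exists>c. x = c *\<^sub>R f" unfolding f_def by blast
  qed
  have eig: "smallest_eigenvalue M 0 \<and> simple_eigenvalue M 0"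
    by (rule eig_lemma[OF _ Mf fnz psd ker]) (use sym in \<open>simp add: symmetric_matrix_def\<close>)
  have relxy: "(x, y) \<in> strong_rel E sg (\<lambda>x. f $ x)" for x y
  proof -
    have "x = y \<or> (\<exists>ys. s_walk E sg (\<lambda>x. f $ x) ys \<and> hd ys = x \<and> last ys = y)"
    proof (cases "x = y")
      case False
      have "(good E sg s)\<^sup>+\<^sup>+ x y" using rtranclpD[OF conn[rule_format, of x y]] False by blast
      from walk_exists[OF this] obtain ys where ys: "length ys \<ge> 2" "hd ys = x" "last ys = y"
          "\<forall>j. Suc j < length ys \<longrightarrow> good E sg s (ys!j) (ys!Suc j)"
        by blast
      have "s_walk E sg (\<lambda>x. f $ x) ys"
        unfolding s_walk_def walk_def
      proof (intro conjI allI impI)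
        show "2 \<le> length ys" by (rule ys(1))
        fix j assume j: "Suc j < length ys"
        have g: "E (ys!j) (ys!Suc j) \<and> s (ys!j) * sg (ys!j) (ys!Suc j) * s (ys!Suc j) = 1"
          using ys(4) j unfolding good_def by blast
        then show "E (ys!j) (ys!Suc j)" by blast
        show "0 < f $ (ys!j) * sg (ys!j) (ys!Suc j) * f $ (ys!Suc j)"
          unfolding f_def vec_lambda_beta using g by simp
      qed
      then show ?thesis using ys by blast
    qed simp
    then show ?thesis unfolding strong_rel_def using fnz by simp
  qed
  have rel: "strong_rel E sg (\<lambda>x. f $ x) = UNIV \<times> UNIV" using relxy by auto
  have dom: "strong_nodal_domains E sg (\<lambda>x. f $ x) = {UNIV}"
    unfolding strong_nodal_domains_def rel using fnz by (auto simp: quotient_def)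
  have num: "num_strong_nodal_domains E sg (\<lambda>x. f $ x) = 1"
    unfolding num_strong_nodal_domains_def dom by simp
  show ?thesis
    by (rule exI[of _ M], rule exI[of _ 0], rule exI[of _ f])
       (use sym comp eig f0 Mf fnz num dom in simp)
qed

end
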